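(* For each integer $s\ge 2$, $m(K_{1,1,1,s})=3$.
   Context: All graphs are finite, simple and undirected. A list assignment $L$ for a graph $G$ assigns to each vertex $v$ a set $L(v)$ of colors; an $L$-coloring is a proper vertex coloring $c$ of $G$ with $c(v)\in L(v)$ for every vertex $v$. A $k$-list assignment is a list assignment with $|L(v)|=k$ for all $v$. $G$ is uniquely $k$-list colorable (U$k$LC) if there exists a $k$-list assignment $L$ such that $G$ has exactly one $L$-coloring. $G$ has property $M(k)$ if it is not U$k$LC, i.e. for every $k$-list assignment $L$, $G$ has either no $L$-coloring or at least two $L$-colorings. The m-number $m(G)$ is the least integer $k\ge 1$ such that $G$ has property $M(k)$. $K_{n_1,\dots,n_r}$ denotes the complete $r$-partite graph with parts of sizes $n_1,\dots,n_r$. *)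

theory Defs
  imports "HOL-Library.FuncSet"
begin

text \<open>A graph is given by a finite vertex set V and a symmetric irreflexive
adjacency relation E. Colours are natural numbers (a countably infinite colour
supply; for finite graphs this loses no generality).\<close>

definition is_L_coloring :: "'a set \<Rightarrow> ('a \<Rightarrow> 'a \<Rightarrow> bool) \<Rightarrow> ('a \<Rightarrow> nat set) \<Rightarrow> ('a \<Rightarrow> nat) \<Rightarrow> bool" where
  "is_L_coloring V E L c \<longleftrightarrow>
     (\<forall>v\<in>V. c v \<in> L v) \<and> (\<forall>u\<in>V. \<forall>v\<in>V. E u v \<longrightarrow> c u \<noteq> c v)"

definition L_colorings :: "'a set \<Rightarrow> ('a \<Rightarrow> 'a \<Rightarrow> bool) \<Rightarrow> ('a \<Rightarrow> nat set) \<Rightarrow> ('a \<Rightarrow> nat) set" where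
  "L_colorings V E L = {c \<in> V \<rightarrow>\<^sub>E UNIV. is_L_coloring V E L c}"

definition is_k_list_assignment :: "'a set \<Rightarrow> nat \<Rightarrow> ('a \<Rightarrow> nat set) \<Rightarrow> bool" where
  "is_k_list_assignment V k L \<longleftrightarrow> (\<forall>v\<in>V. finite (L v) \<and> card (L v) = k)"

definition uniquely_k_list_colorable :: "'a set \<Rightarrow> ('a \<Rightarrow> 'a \<Rightarrow> bool) \<Rightarrow> nat \<Rightarrow> bool" where
  "uniquely_k_list_colorable V E k \<longleftrightarrow>
     (\<exists>L. is_k_list_assignment V k L \<and> (\<exists>!c. c \<in> L_colorings V E L))"

definition property_M :: "'a set \<Rightarrow> ('a \<Rightarrow> 'a \<Rightarrow> bool) \<Rightarrow> nat \<Rightarrow> bool" where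
  "property_M V E k \<longleftrightarrow> \<not> uniquely_k_list_colorable V E k"

definition m_number :: "'a set \<Rightarrow> ('a \<Rightarrow> 'a \<Rightarrow> bool) \<Rightarrow> nat" where
  "m_number V E = (LEAST k. k \<ge> 1 \<and> property_M V E k)"

text \<open>Complete multipartite graph K_{n_1,...,n_r}: vertices (i,j) with i < r,
j < n_i; two vertices are adjacent iff they lie in different parts.\<close>
definition cmp_vertices :: "nat list \<Rightarrow> (nat \<times> nat) set" where
  "cmp_vertices ns = {(i, j). i < length ns \<and> j < ns ! i}"

definition cmp_adj :: "(nat \<times> nat) \<Rightarrow> (nat \<times> nat) \<Rightarrow> bool" where
  "cmp_adj x y \<longleftrightarrow> fst x \<noteq> fst y"

end

theory Submission
  imports Defs
begin

lemma Lcol_col: "c \<in> L_colorings V E L \<Longrightarrow> v \<in> V \<Longrightarrow> c v \<in> L v"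
  unfolding L_colorings_def is_L_coloring_def by blast
lemma Lcol_prop: "c \<in> L_colorings V E L \<Longrightarrow> u \<in> V \<Longrightarrow> v \<in> V \<Longrightarrow> E u v \<Longrightarrow> c u \<noteq> c v"
  unfolding L_colorings_def is_L_coloring_def by blast
lemma Lcol_ext: "c \<in> L_colorings V E L \<Longrightarrow> v \<notin> V \<Longrightarrow> c v = undefined"
  unfolding L_colorings_def using PiE_arb by blast
lemma Lcol_I: "(\<And>v. v \<notin> V \<Longrightarrow> c v = undefined) \<Longrightarrow> (\<And>v. v \<in> V \<Longrightarrow> c v \<in> L v) \<Longrightarrow>
   (\<And>u v. u \<in> V \<Longrightarrow> v \<in> V \<Longrightarrow> E u v \<Longrightarrow> c u \<noteq> c v) \<Longrightarrow> c \<in> L_colorings V E L"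
  unfolding L_colorings_def is_L_coloring_def
  by (intro CollectI conjI PiE_I) auto
lemma Lcol_eq: "c \<in> L_colorings V E L \<Longrightarrow> c' \<in> L_colorings V E L \<Longrightarrow> (\<And>v. v \<in> V \<Longrightarrow> c v = c' v) \<Longrightarrow> c = c'"
  by (metis Lcol_ext ext)
lemma notM_I: "is_k_list_assignment V k L \<Longrightarrow> c \<in> L_colorings V E L \<Longrightarrow>
   (\<And>c'. c' \<in> L_colorings V E L \<Longrightarrow> c' = c) \<Longrightarrow> \<not> property_M V E k"
  unfolding property_M_def uniquely_k_list_colorable_def by blast


lemma sink:
  fixes La Lb Lc :: "nat set"
  assumes c: "card La = 3" "card Lb = 3" "card Lc = 3"
    and m: "\<alpha> \<in> La" "\<beta> \<in> Lb" "\<gamma> \<in> Lc"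
    and d: "\<alpha> \<noteq> \<beta>" "\<beta> \<noteq> \<gamma>" "\<alpha> \<noteq> \<gamma>"
    and S: "S = {\<alpha>,\<beta>,\<gamma>}"
    and n: "\<beta> \<notin> La" "\<gamma> \<notin> La"
    and nb: "\<not> (\<exists>x\<in>La. \<exists>y\<in>Lb. x \<noteq> y \<and> x \<notin> S \<and> y \<notin> S)"
    and nc: "\<not> (\<exists>x\<in>La. \<exists>y\<in>Lc. x \<noteq> y \<and> x \<notin> S \<and> y \<notin> S)"
  shows "\<gamma> \<in> Lb \<and> \<beta> \<in> Lc"
proof -
  have fin: "finite La" "finite Lb" "finite Lc" using c by (auto intro: card_ge_0_finite)
  have c2: "card (La - {\<alpha>}) = 2" using c fin m by simp
  then obtain x1 x2 where x: "La - {\<alpha>} = {x1,x2}" "x1 \<noteq> x2" by (auto simp: card_2_iff)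
  have xS: "x1 \<notin> S" "x2 \<notin> S" "x1 \<in> La" "x2 \<in> La" using x n S by auto
  have sub: "L \<subseteq> S" if "L = Lb \<or> L = Lc" for L
  proof
    fix y assume "y \<in> L"
    show "y \<in> S"
    proof (rule ccontr)
      assume "y \<notin> S"
      have yb: "y \<in> Lb \<or> y \<in> Lc" using that \<open>y \<in> L\<close> by blast
      obtain x where "x \<in> La" "x \<notin> S" "x \<noteq> y"
        using xS x(2) by (cases "x1 = y") auto
      then show False using nb nc yb \<open>y \<notin> S\<close> by blast
    qed
  qed
  have cS: "card S \<le> 3" unfolding S by (simp add: card_insert_le_m1)
  have fS: "finite S" unfolding S by simp
  have "Lb = S" by (rule card_seteq[OF fS sub]) (use c cS in simp_all)
  moreover have "Lc = S" by (rule card_seteq[OF fS sub]) (use c cS in simp_all)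
  ultimately show ?thesis unfolding S by simp
qed

lemma ex3I: "p \<in> La \<Longrightarrow> q \<in> Lb \<Longrightarrow> r \<in> Lc \<Longrightarrow> p \<noteq> q \<Longrightarrow> q \<noteq> r \<Longrightarrow> p \<noteq> r \<Longrightarrow> {p,q,r} = S \<Longrightarrow> (p,q,r) \<noteq> (\<alpha>,\<beta>,\<gamma>) \<Longrightarrow>
  \<exists>p\<in>La. \<exists>q\<in>Lb. \<exists>r\<in>Lc. p \<noteq> q \<and> q \<noteq> r \<and> p \<noteq> r \<and> {p,q,r} = S \<and> (p,q,r) \<noteq> (\<alpha>,\<beta>,\<gamma>)"
  by (intro bexI conjI)

lemma tri:
  fixes La Lb Lc :: "nat set"
  assumes c: "card La = 3" "card Lb = 3" "card Lc = 3"
    and m: "\<alpha> \<in> La" "\<beta> \<in> Lb" "\<gamma> \<in> Lc"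
    and d: "\<alpha> \<noteq> \<beta>" "\<beta> \<noteq> \<gamma>" "\<alpha> \<noteq> \<gamma>"
    and S: "S = {\<alpha>,\<beta>,\<gamma>}"
  shows "(\<exists>p\<in>La. \<exists>q\<in>Lb. \<exists>r\<in>Lc. p \<noteq> q \<and> q \<noteq> r \<and> p \<noteq> r \<and> {p,q,r} = S \<and> (p,q,r) \<noteq> (\<alpha>,\<beta>,\<gamma>))
    \<or> (\<exists>x\<in>La. \<exists>y\<in>Lb. x \<noteq> y \<and> x \<notin> S \<and> y \<notin> S)
    \<or> (\<exists>x\<in>La. \<exists>y\<in>Lc. x \<noteq> y \<and> x \<notin> S \<and> y \<notin> S)
    \<or> (\<exists>x\<in>Lb. \<exists>y\<in>Lc. x \<noteq> y \<and> x \<notin> S \<and> y \<notin> S)"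
proof (rule ccontr)
  assume H: "\<not> ?thesis"
  have n0: "\<not> (\<exists>p\<in>La. \<exists>q\<in>Lb. \<exists>r\<in>Lc. p \<noteq> q \<and> q \<noteq> r \<and> p \<noteq> r \<and> {p,q,r} = S \<and> (p,q,r) \<noteq> (\<alpha>,\<beta>,\<gamma>))"
    and nab: "\<not> (\<exists>x\<in>La. \<exists>y\<in>Lb. x \<noteq> y \<and> x \<notin> S \<and> y \<notin> S)"
    and nac: "\<not> (\<exists>x\<in>La. \<exists>y\<in>Lc. x \<noteq> y \<and> x \<notin> S \<and> y \<notin> S)"
    and nbc: "\<not> (\<exists>x\<in>Lb. \<exists>y\<in>Lc. x \<noteq> y \<and> x \<notin> S \<and> y \<notin> S)"
    using H by simp_all
  have nba: "\<not> (\<exists>x\<in>Lb. \<exists>y\<in>La. x \<noteq> y \<and> x \<notin> S \<and> y \<notin> S)" using nab by auto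
  have nca: "\<not> (\<exists>x\<in>Lc. \<exists>y\<in>La. x \<noteq> y \<and> x \<notin> S \<and> y \<notin> S)" using nac by auto
  have ncb: "\<not> (\<exists>x\<in>Lc. \<exists>y\<in>Lb. x \<noteq> y \<and> x \<notin> S \<and> y \<notin> S)" using nbc by auto
  have s1: "\<not> (\<beta> \<in> La \<and> \<alpha> \<in> Lb)"
  proof
    assume h: "\<beta> \<in> La \<and> \<alpha> \<in> Lb"
    have "\<exists>p\<in>La. \<exists>q\<in>Lb. \<exists>r\<in>Lc. p \<noteq> q \<and> q \<noteq> r \<and> p \<noteq> r \<and> {p,q,r} = S \<and> (p,q,r) \<noteq> (\<alpha>,\<beta>,\<gamma>)"
      by (rule ex3I[of \<beta> La \<alpha> Lb \<gamma> Lc]) (use m d S h in \<open>auto simp: insert_commute\<close>)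
    then show False using n0 by contradiction
  qed
  have s2: "\<not> (\<gamma> \<in> La \<and> \<alpha> \<in> Lc)"
  proof
    assume h: "\<gamma> \<in> La \<and> \<alpha> \<in> Lc"
    have "\<exists>p\<in>La. \<exists>q\<in>Lb. \<exists>r\<in>Lc. p \<noteq> q \<and> q \<noteq> r \<and> p \<noteq> r \<and> {p,q,r} = S \<and> (p,q,r) \<noteq> (\<alpha>,\<beta>,\<gamma>)"
      by (rule ex3I[of \<gamma> La \<beta> Lb \<alpha> Lc]) (use m d S h in \<open>auto simp: insert_commute\<close>)
    then show False using n0 by contradiction
  qed
  have s3: "\<not> (\<gamma> \<in> Lb \<and> \<beta> \<in> Lc)"
  proof
    assume h: "\<gamma> \<in> Lb \<and> \<beta> \<in> Lc"
    have "\<exists>p\<in>La. \<exists>q\<in>Lb. \<exists>r\<in>Lc. p \<noteq> q \<and> q \<noteq> r \<and> p \<noteq> r \<and> {p,q,r} = S \<and> (p,q,r) \<noteq> (\<alpha>,\<beta>,\<gamma>)"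
      by (rule ex3I[of \<alpha> La \<gamma> Lb \<beta> Lc]) (use m d S h in \<open>auto simp: insert_commute\<close>)
    then show False using n0 by contradiction
  qed
  have s4: "\<not> (\<beta> \<in> La \<and> \<gamma> \<in> Lb \<and> \<alpha> \<in> Lc)"
  proof
    assume h: "\<beta> \<in> La \<and> \<gamma> \<in> Lb \<and> \<alpha> \<in> Lc"
    have "\<exists>p\<in>La. \<exists>q\<in>Lb. \<exists>r\<in>Lc. p \<noteq> q \<and> q \<noteq> r \<and> p \<noteq> r \<and> {p,q,r} = S \<and> (p,q,r) \<noteq> (\<alpha>,\<beta>,\<gamma>)"
      by (rule ex3I[of \<beta> La \<gamma> Lb \<alpha> Lc]) (use m d S h in \<open>auto simp: insert_commute\<close>)
    then show False using n0 by contradiction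
  qed
  have s5: "\<not> (\<gamma> \<in> La \<and> \<alpha> \<in> Lb \<and> \<beta> \<in> Lc)"
  proof
    assume h: "\<gamma> \<in> La \<and> \<alpha> \<in> Lb \<and> \<beta> \<in> Lc"
    have "\<exists>p\<in>La. \<exists>q\<in>Lb. \<exists>r\<in>Lc. p \<noteq> q \<and> q \<noteq> r \<and> p \<noteq> r \<and> {p,q,r} = S \<and> (p,q,r) \<noteq> (\<alpha>,\<beta>,\<gamma>)"
      by (rule ex3I[of \<gamma> La \<alpha> Lb \<beta> Lc]) (use m d S h in \<open>auto simp: insert_commute\<close>)
    then show False using n0 by contradiction
  qed
  have sinks: "(\<beta> \<notin> La \<and> \<gamma> \<notin> La) \<or> (\<alpha> \<notin> Lb \<and> \<gamma> \<notin> Lb) \<or> (\<alpha> \<notin> Lc \<and> \<beta> \<notin> Lc)"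
    using s1 s2 s3 s4 s5 by blast
  moreover have "\<not> (\<beta> \<notin> La \<and> \<gamma> \<notin> La)"
  proof
    assume "\<beta> \<notin> La \<and> \<gamma> \<notin> La"
    then have "\<gamma> \<in> Lb \<and> \<beta> \<in> Lc" using sink[OF c m d S _ _ nab nac] by blast
    then show False using s3 by blast
  qed
  moreover have "\<not> (\<alpha> \<notin> Lb \<and> \<gamma> \<notin> Lb)"
  proof
    assume "\<alpha> \<notin> Lb \<and> \<gamma> \<notin> Lb"
    moreover have "S = {\<beta>,\<alpha>,\<gamma>}" using S by auto
    ultimately have "\<gamma> \<in> La \<and> \<alpha> \<in> Lc" using sink[OF c(2,1,3) m(2,1,3) d(1)[symmetric] d(3) d(2) _ _ _ nba nbc] by blast
    then show False using s2 by blast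
  qed
  moreover have "\<not> (\<alpha> \<notin> Lc \<and> \<beta> \<notin> Lc)"
  proof
    assume "\<alpha> \<notin> Lc \<and> \<beta> \<notin> Lc"
    moreover have "S = {\<gamma>,\<alpha>,\<beta>}" using S by auto
    ultimately have "\<beta> \<in> La \<and> \<alpha> \<in> Lb" using sink[OF c(3,1,2) m(3,1,2) d(3)[symmetric] d(1) d(2)[symmetric] _ _ _ nca ncb] by blast
    then show False using s1 by blast
  qed
  ultimately show False by blast
qed



lemma V_iff: "v \<in> cmp_vertices [1,1,1,s] \<longleftrightarrow>
   v = (0,0) \<or> v = (1,0) \<or> v = (2,0) \<or> (fst v = 3 \<and> snd v < s)"
proof (cases v)
  case (Pair i j)
  have "i < 4 \<longleftrightarrow> i = 0 \<or> i = 1 \<or> i = 2 \<or> i = 3" by auto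
  then show ?thesis unfolding cmp_vertices_def Pair by auto
qed

lemma not_M1: "\<not> property_M (cmp_vertices [1,1,1,s]) cmp_adj 1"
proof (rule notM_I)
  let ?V = "cmp_vertices [1,1,1,s]"
  show "is_k_list_assignment ?V 1 (\<lambda>v. {fst v})" unfolding is_k_list_assignment_def by simp
  show c: "restrict fst ?V \<in> L_colorings ?V cmp_adj (\<lambda>v. {fst v})"
    by (rule Lcol_I) (auto simp: cmp_adj_def)
  fix c assume "c \<in> L_colorings ?V cmp_adj (\<lambda>v. {fst v})"
  then show "c = restrict fst ?V"
    using c by (rule Lcol_eq) (use Lcol_col[OF \<open>c \<in> _\<close>] in auto)
qed

lemma not_M2:
  assumes "s \<ge> 2"
  shows "\<not> property_M (cmp_vertices [1,1,1,s]) cmp_adj 2"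
proof -
  let ?V = "cmp_vertices [1,1,1,s]"
  define L :: "nat\<times>nat \<Rightarrow> nat set" where "L v = (if v = (0,0) then {1,2} else if v = (1,0) then {2,3}
     else if v = (2,0) then {3,4} else if v = (3,0) then {1,4} else {2,4})" for v
  define c0 where "c0 = restrict (\<lambda>v::nat\<times>nat. if fst v < 3 then fst v + 1 else 4) ?V"
  have kl: "is_k_list_assignment ?V 2 L" unfolding is_k_list_assignment_def L_def by simp
  have f: "c0 v = (if fst v < 3 then fst v + 1 else 4)" if "v \<in> ?V" for v
    using that unfolding c0_def by simp
  have c: "c0 \<in> L_colorings ?V cmp_adj L"
  proof (rule Lcol_I)
    show "c0 v = undefined" if "v \<notin> ?V" for v using that unfolding c0_def by simp
  next
    fix v assume v: "v \<in> ?V"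
    then show "c0 v \<in> L v" unfolding f[OF v] using v unfolding V_iff L_def by auto
  next
    fix u v assume u: "u \<in> ?V" and v: "v \<in> ?V" and "cmp_adj u v"
    moreover have "fst u < 4" "fst v < 4" using u v unfolding V_iff by auto
    ultimately show "c0 u \<noteq> c0 v" unfolding f[OF u] f[OF v] cmp_adj_def by auto
  qed
  have u: "c = c0" if cL: "c \<in> L_colorings ?V cmp_adj L" for c
  proof -
    have inV: "(0,0) \<in> ?V" "(1,0) \<in> ?V" "(2,0) \<in> ?V" "(3,0) \<in> ?V" "(3,1) \<in> ?V"
      using assms unfolding V_iff by auto
    note col = Lcol_col[OF cL] and pr = Lcol_prop[OF cL, unfolded cmp_adj_def]
    have A: "c (0,0) \<in> {1,2}" "c (1,0) \<in> {2,3}" "c (2,0) \<in> {3,4}" "c (3,0) \<in> {1,4}" "c (3,1) \<in> {2,4}"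
      using col[OF inV(1)] col[OF inV(2)] col[OF inV(3)] col[OF inV(4)] col[OF inV(5)] by (auto simp: L_def)
    have P: "c (0,0) \<noteq> c (1,0)" "c (0,0) \<noteq> c (2,0)" "c (1,0) \<noteq> c (2,0)"
      "c (0,0) \<noteq> c (3,0)" "c (1,0) \<noteq> c (3,0)" "c (2,0) \<noteq> c (3,0)"
      "c (0,0) \<noteq> c (3,1)" "c (1,0) \<noteq> c (3,1)" "c (2,0) \<noteq> c (3,1)"
      using pr inV by auto
    have vals: "c (0,0) = 1" "c (1,0) = 2" "c (2,0) = 3" "c (3,0) = 4"
      using A P by auto
    show "c = c0"
    proof (rule Lcol_eq[OF cL c])
      fix v assume True: "v \<in> ?V"
      then consider "v = (0,0)" | "v = (1,0)" | "v = (2,0)" | "v = (3,0)" | "fst v = 3 \<and> snd v \<noteq> 0"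
        unfolding V_iff by (cases v) force
      then show "c v = c0 v"
      proof cases
        case 5
        have "L v = {2,4}" using 5 unfolding L_def by (cases v) auto
        then have "c v \<in> {2,4}" using col[OF True] by simp
        moreover have "c v \<noteq> c (1,0)" using pr[OF inV(2) True] 5 by auto
        ultimately show ?thesis using vals 5 f[OF True] by auto
      qed (use vals f[OF True] in auto)
    qed
  qed
  show ?thesis using kl c u by (rule notM_I)
qed



lemma extend:
  fixes L :: "nat\<times>nat \<Rightarrow> nat set"
  assumes m: "p \<in> L (0,0)" "q \<in> L (1,0)" "r \<in> L (2,0)" and d: "p \<noteq> q" "q \<noteq> r" "p \<noteq> r"
    and D: "\<forall>j<s. \<exists>col\<in>L (3,j). col \<notin> {p,q,r}"
  shows "\<exists>c'\<in>L_colorings (cmp_vertices [1,1,1,s]) cmp_adj L. c' (0,0) = p \<and> c' (1,0) = q \<and> c' (2,0) = r"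
proof -
  let ?V = "cmp_vertices [1,1,1,s]"
  define g where "g v = (if v = (0,0) then p else if v = (1,0) then q else if v = (2,0) then r
      else (SOME col. col \<in> L v \<and> col \<notin> {p,q,r}))" for v :: "nat\<times>nat"
  define c' where "c' = restrict g ?V"
  have inV: "(0,0) \<in> ?V" "(1,0) \<in> ?V" "(2,0) \<in> ?V" unfolding V_iff by auto
  have D3: "c' v \<in> L v \<and> c' v \<notin> {p,q,r}" if "v \<in> ?V" "fst v = 3" for v
  proof -
    have v: "v \<noteq> (0,0)" "v \<noteq> (1,0)" "v \<noteq> (2,0)" "snd v < s" using that unfolding V_iff by auto
    then have "\<exists>col. col \<in> L v \<and> col \<notin> {p,q,r}" using D that(2) by (cases v) auto
    then have "g v \<in> L v \<and> g v \<notin> {p,q,r}" unfolding g_def using v by (simp only: if_False) (rule someI_ex)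
    then show ?thesis unfolding c'_def using that(1) by simp
  qed
  have T: "c' v \<in> L v \<and> c' v \<in> {p,q,r} \<and> c' v = (if fst v = 0 then p else if fst v = 1 then q else r)"
    if "v \<in> ?V" "fst v \<noteq> 3" for v
  proof -
    have "v = (0,0) \<or> v = (1,0) \<or> v = (2,0)" using that unfolding V_iff by auto
    then show ?thesis unfolding c'_def g_def using that(1) m by auto
  qed
  have "c' \<in> L_colorings ?V cmp_adj L"
  proof (rule Lcol_I)
    show "c' v = undefined" if "v \<notin> ?V" for v using that unfolding c'_def by simp
  next
    fix v assume "v \<in> ?V" then show "c' v \<in> L v" using D3 T by blast
  next
    fix u v assume u: "u \<in> ?V" and v: "v \<in> ?V" and "cmp_adj u v"
    then have ne: "fst u \<noteq> fst v" unfolding cmp_adj_def by simp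
    have lt: "fst u < 4" "fst v < 4" using u v unfolding V_iff by auto
    show "c' u \<noteq> c' v"
    proof (cases "fst u = 3")
      case True
      then have "fst v \<noteq> 3" using ne by simp
      then show ?thesis using D3[OF u True] T[OF v] by auto
    next
      case False
      show ?thesis
      proof (cases "fst v = 3")
        case True
        then show ?thesis using D3[OF v True] T[OF u False] by auto
      next
        case F2: False
        show ?thesis using T[OF u False] T[OF v F2] ne d lt False F2 by (auto split: if_splits)
      qed
    qed
  qed
  moreover have "c' (0,0) = p \<and> c' (1,0) = q \<and> c' (2,0) = r" unfolding c'_def g_def using inV by simp
  ultimately show ?thesis by blast
qed


lemma M3: "property_M (cmp_vertices [1,1,1,s]) cmp_adj 3"
  unfolding property_M_def uniquely_k_list_colorable_def
proof
  let ?V = "cmp_vertices [1,1,1,s]"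
  assume "\<exists>L. is_k_list_assignment ?V 3 L \<and> (\<exists>!c. c \<in> L_colorings ?V cmp_adj L)"
  then obtain L \<phi> where kl: "is_k_list_assignment ?V 3 L" and ph: "\<phi> \<in> L_colorings ?V cmp_adj L"
    and uq: "\<And>c. c \<in> L_colorings ?V cmp_adj L \<Longrightarrow> c = \<phi>" by blast
  have inV: "(0,0) \<in> ?V" "(1,0) \<in> ?V" "(2,0) \<in> ?V" unfolding V_iff by auto
  have cardL: "finite (L v) \<and> card (L v) = 3" if "v \<in> ?V" for v
    using kl that unfolding is_k_list_assignment_def by blast
  note col = Lcol_col[OF ph] and pr = Lcol_prop[OF ph, unfolded cmp_adj_def]
  define \<alpha> where "\<alpha> = \<phi> (0,0)"
  define \<beta> where "\<beta> = \<phi> (1,0)"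
  define \<gamma> where "\<gamma> = \<phi> (2,0)"
  define S where "S = {\<alpha>,\<beta>,\<gamma>}"
  have m: "\<alpha> \<in> L (0,0)" "\<beta> \<in> L (1,0)" "\<gamma> \<in> L (2,0)"
    unfolding \<alpha>_def \<beta>_def \<gamma>_def using col inV by auto
  have d: "\<alpha> \<noteq> \<beta>" "\<beta> \<noteq> \<gamma>" "\<alpha> \<noteq> \<gamma>"
    unfolding \<alpha>_def \<beta>_def \<gamma>_def using pr inV by auto
  have inD: "(3,j) \<in> ?V" if "j < s" for j using that unfolding V_iff by auto
  have phD: "\<phi> (3,j) \<in> L (3,j) \<and> \<phi> (3,j) \<notin> S" if "j < s" for j
    using col[OF inD[OF that]] pr[OF inD[OF that] inV(1)] pr[OF inD[OF that] inV(2)] pr[OF inD[OF that] inV(3)]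
    unfolding S_def \<alpha>_def \<beta>_def \<gamma>_def by auto
  have recol: "x = \<phi> (3,j)" if j: "j < s" and x: "x \<in> L (3,j)" "x \<notin> S" for j x
  proof -
    let ?c = "\<phi>((3,j) := x)"
    have "?c \<in> L_colorings ?V cmp_adj L"
    proof (rule Lcol_I)
      show "?c v = undefined" if "v \<notin> ?V" for v
        using that inD[OF j] Lcol_ext[OF ph that] by auto
    next
      fix v assume "v \<in> ?V" then show "?c v \<in> L v" using col x by auto
    next
      fix u v assume u: "u \<in> ?V" and v: "v \<in> ?V" and a: "cmp_adj u v"
      have tri: "\<phi> w \<in> S" if "w \<in> ?V" "fst w \<noteq> 3" for w
      proof -
        have "w = (0,0) \<or> w = (1,0) \<or> w = (2,0)" using that unfolding V_iff by auto
        then show ?thesis unfolding S_def \<alpha>_def \<beta>_def \<gamma>_def by auto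
      qed
      show "?c u \<noteq> ?c v"
      proof (cases "u = (3,j)")
        case True
        then have "v \<noteq> (3,j)" "fst v \<noteq> 3" using a unfolding cmp_adj_def by auto
        then show ?thesis using True tri[OF v] x by auto
      next
        case False
        show ?thesis
        proof (cases "v = (3,j)")
          case True
          then have "fst u \<noteq> 3" using a unfolding cmp_adj_def by auto
          then show ?thesis using True False tri[OF u] x by auto
        next
          case F2: False
          then show ?thesis using False pr[OF u v] a unfolding cmp_adj_def by auto
        qed
      qed
    qed
    then have "?c = \<phi>" by (rule uq)
    then have "?c (3,j) = \<phi> (3,j)" by simp
    then show ?thesis by simp
  qed
  have ext: "p = \<alpha> \<and> q = \<beta> \<and> r = \<gamma>"
    if hh: "p \<in> L (0,0)" "q \<in> L (1,0)" "r \<in> L (2,0)" "p \<noteq> q" "q \<noteq> r" "p \<noteq> r"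
      "\<forall>j<s. \<exists>col\<in>L (3,j). col \<notin> {p,q,r}" for p q r
  proof -
    obtain c' where c': "c' \<in> L_colorings ?V cmp_adj L" "c' (0,0) = p \<and> c' (1,0) = q \<and> c' (2,0) = r"
      using extend[OF hh] by blast
    have "c' = \<phi>" using uq[OF c'(1)] .
    then show ?thesis using c'(2) unfolding \<alpha>_def \<beta>_def \<gamma>_def by simp
  qed
  have two: "\<forall>j<s. \<exists>col\<in>L (3,j). col \<notin> {x,y,z}" if "x \<notin> S" "y \<notin> S" "x \<noteq> y" for x y z
  proof (intro allI impI)
    fix j assume j: "j < s"
    show "\<exists>col\<in>L (3,j). col \<notin> {x,y,z}"
    proof (rule ccontr)
      assume "\<not> ?thesis"
      then have sub: "L (3,j) \<subseteq> {x,y,z}" by blast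
      have fin: "finite {x,y,z}" by simp
      have "card {x,y,z} \<le> 3" by (simp add: card_insert_le_m1)
      then have "L (3,j) = {x,y,z}" using card_seteq[OF fin sub] cardL[OF inD[OF j]] by simp
      then have "x = \<phi> (3,j)" "y = \<phi> (3,j)" using recol[OF j _ that(1)] recol[OF j _ that(2)] by auto
      then show False using that(3) by simp
    qed
  qed
  have cards: "card (L (0,0)) = 3" "card (L (1,0)) = 3" "card (L (2,0)) = 3" using cardL inV by auto
  from tri[OF cards m d S_def] show False
  proof (elim disjE bexE conjE)
    fix p q r assume pqr: "p \<in> L (0,0)" "q \<in> L (1,0)" "r \<in> L (2,0)" "p \<noteq> q" "q \<noteq> r" "p \<noteq> r"
      "{p,q,r} = S" "(p,q,r) \<noteq> (\<alpha>,\<beta>,\<gamma>)"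
    have "\<forall>j<s. \<exists>col\<in>L (3,j). col \<notin> {p,q,r}" using phD pqr(7) by blast
    then show False using ext[OF pqr(1-6)] pqr(8) by simp
  next
    fix x y assume h: "x \<in> L (0,0)" "y \<in> L (1,0)" "x \<noteq> y" "x \<notin> S" "y \<notin> S"
    have "x \<noteq> \<gamma>" "y \<noteq> \<gamma>" using h unfolding S_def by auto
    then have "x = \<alpha>" using ext[OF h(1,2) m(3) h(3)] two[OF h(4,5,3)] by blast
    then show False using h(4) unfolding S_def by simp
  next
    fix x y assume h: "x \<in> L (0,0)" "y \<in> L (2,0)" "x \<noteq> y" "x \<notin> S" "y \<notin> S"
    have "x \<noteq> \<beta>" "\<beta> \<noteq> y" using h unfolding S_def by auto
    moreover have "\<forall>j<s. \<exists>col\<in>L (3,j). col \<notin> {x,\<beta>,y}"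
      using two[OF h(4,5,3), of \<beta>] by (simp add: insert_commute)
    ultimately have "x = \<alpha>" using ext[OF h(1) m(2) h(2)] h(3) by blast
    then show False using h(4) unfolding S_def by simp
  next
    fix x y assume h: "x \<in> L (1,0)" "y \<in> L (2,0)" "x \<noteq> y" "x \<notin> S" "y \<notin> S"
    have "\<alpha> \<noteq> x" "\<alpha> \<noteq> y" using h unfolding S_def by auto
    moreover have "\<forall>j<s. \<exists>col\<in>L (3,j). col \<notin> {\<alpha>,x,y}"
      using two[OF h(4,5,3), of \<alpha>] by (simp add: insert_commute)
    ultimately have "x = \<beta>" using ext[OF m(1) h(1) h(2)] h(3) by blast
    then show False using h(4) unfolding S_def by simp
  qed
qed


theorem proposition3p6:
  fixes s :: nat
  assumes "s \<ge> 2"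
  shows "m_number (cmp_vertices [1, 1, 1, s]) cmp_adj = 3"
  unfolding m_number_def
proof (rule Least_equality)
  show "3 \<ge> (1::nat) \<and> property_M (cmp_vertices [1, 1, 1, s]) cmp_adj 3" using M3 by simp
next
  fix y :: nat assume y: "y \<ge> 1 \<and> property_M (cmp_vertices [1, 1, 1, s]) cmp_adj y"
  show "3 \<le> y"
  proof (rule ccontr)
    assume "\<not> 3 \<le> y"
    then have "y = 1 \<or> y = 2" using y by auto
    then show False using y not_M1 not_M2[OF assms] by auto
  qed
qed

end
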